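(* Fix $0<b<1$. For $\lambda>0$ let $s_\lambda$ be a minimizer of $$J_\lambda[s]=2\pi\int_b^1\Big(s'^2+\frac{4s^2}{r^2}+\frac{\lambda}{4}(2s^2-1)^2\Big)r\,dr$$ over $s\in H^1(b,1)$ with $s(b)=s(1)=\frac1{\sqrt2}$. Then $s_\lambda\to\frac1{\sqrt2}$ uniformly on $[b,1]$ as $\lambda\to\infty$.
   Context: Here $\lambda=|A|/L$, where $A<0$ is the (rescaled) temperature parameter and $L>0$ the elastic constant of the Landau–de Gennes model; $s_\lambda$ is the scalar order parameter of the defect-free state $Q^*=s_\lambda(r)(\mathbf n\otimes\mathbf n-\mathbf m\otimes\mathbf m)$ on the annulus $b\le r\le1$, and it is a nonnegative classical solution of $s''+s'/r-4s/r^2=\lambda s(2s^2-1)$. *)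

theory Defs
  imports "HOL-Analysis.Analysis"
begin

text \<open>Sobolev space H^1 on an interval [a,c] in one dimension: s (its continuous
representative) is an indefinite integral of a square-integrable weak derivative g.\<close>
definition H1_on :: "real \<Rightarrow> real \<Rightarrow> (real \<Rightarrow> real) \<Rightarrow> (real \<Rightarrow> real) \<Rightarrow> bool" where
  "H1_on a c s g \<longleftrightarrow>
     g absolutely_integrable_on {a..c} \<and>
     (\<lambda>r. (g r)\<^sup>2) integrable_on {a..c} \<and>
     (\<forall>x\<in>{a..c}. s x = s a + integral {a..x} g)"

definition J_energy :: "real \<Rightarrow> real \<Rightarrow> (real \<Rightarrow> real) \<Rightarrow> (real \<Rightarrow> real) \<Rightarrow> real" where
  "J_energy b lam s g =
     2 * pi * integral {b..1}
       (\<lambda>r. ((g r)\<^sup>2 + 4 * (s r)\<^sup>2 / r\<^sup>2 + lam / 4 * (2 * (s r)\<^sup>2 - 1)\<^sup>2) * r)"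

definition admissible :: "real \<Rightarrow> (real \<Rightarrow> real) \<Rightarrow> (real \<Rightarrow> real) \<Rightarrow> bool" where
  "admissible b s g \<longleftrightarrow> H1_on b 1 s g \<and> s b = 1 / sqrt 2 \<and> s 1 = 1 / sqrt 2"

definition is_minimizer :: "real \<Rightarrow> real \<Rightarrow> (real \<Rightarrow> real) \<Rightarrow> bool" where
  "is_minimizer b lam s \<longleftrightarrow>
     (\<exists>g. admissible b s g \<and>
        (\<forall>t h. admissible b t h \<longrightarrow> J_energy b lam s g \<le> J_energy b lam t h))"

end

theory Submission
  imports Defs
begin

lemma abs_int_imp_int: fixes f :: "real \<Rightarrow> real" shows "f absolutely_integrable_on S \<Longrightarrow> f integrable_on S"
  unfolding absolutely_integrable_on_def by simp

lemma const_admissible: "admissible b (\<lambda>_. 1 / sqrt 2) (\<lambda>_. 0)"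
  unfolding admissible_def H1_on_def by auto

lemma const_energy:
  assumes "0 < b"
  shows "J_energy b lam (\<lambda>_. 1 / sqrt 2) (\<lambda>_. 0) = 2 * pi * integral {b..1} (\<lambda>r. 2 / r)"
proof -
  have "integral {b..1} (\<lambda>r. ((0::real)\<^sup>2 + 4 * (1 / sqrt 2)\<^sup>2 / r\<^sup>2 + lam / 4 * (2 * (1 / sqrt 2)\<^sup>2 - 1)\<^sup>2) * r)
       = integral {b..1} (\<lambda>r. 2 / r)"
  proof (rule integral_cong)
    fix r assume "r \<in> {b..1}"
    then have "r > 0" using assms by auto
    then show "((0::real)\<^sup>2 + 4 * (1 / sqrt 2)\<^sup>2 / r\<^sup>2 + lam / 4 * (2 * (1 / sqrt 2)\<^sup>2 - 1)\<^sup>2) * r = 2 / r"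
      by (simp add: power_divide power2_eq_square field_simps)
  qed
  then show ?thesis unfolding J_energy_def by simp
qed

lemma energy_bounds:
  fixes b lam :: real and s g :: "real \<Rightarrow> real"
  defines "M0 \<equiv> integral {b..1} (\<lambda>r. 2 / r)"
  assumes b: "0 < b" "b < 1" and lam: "lam > 0" and adm: "admissible b s g"
    and mn: "\<And>t h. admissible b t h \<Longrightarrow> J_energy b lam s g \<le> J_energy b lam t h"
  shows "continuous_on {b..1} s" "s b = 1 / sqrt 2"
    "(\<lambda>r. (g r)\<^sup>2) integrable_on {b..1}"
    "integral {b..1} (\<lambda>r. (g r)\<^sup>2) \<le> M0 / b"
    "integral {b..1} (\<lambda>r. (2 * (s r)\<^sup>2 - 1)\<^sup>2) \<le> 4 * M0 / (lam * b)"
    "g integrable_on {b..1}"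
    "\<And>x. x \<in> {b..1} \<Longrightarrow> s x = s b + integral {b..x} g"
proof -
  have H: "g absolutely_integrable_on {b..1}" "(\<lambda>r. (g r)\<^sup>2) integrable_on {b..1}"
    "\<And>x. x \<in> {b..1} \<Longrightarrow> s x = s b + integral {b..x} g"
    using adm unfolding admissible_def H1_on_def by auto
  show sb: "s b = 1 / sqrt 2" using adm unfolding admissible_def by auto
  show gi: "g integrable_on {b..1}" using H(1) abs_int_imp_int by blast
  show "(\<lambda>r. (g r)\<^sup>2) integrable_on {b..1}" by (rule H(2))
  show "\<And>x. x \<in> {b..1} \<Longrightarrow> s x = s b + integral {b..x} g" by (rule H(3))
  have "continuous_on {b..1} (\<lambda>x. s b + integral {b..x} g)"
    by (intro continuous_intros indefinite_integral_continuous_1 gi)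
  then show sc: "continuous_on {b..1} s"
    using continuous_on_eq H(3) by (metis (no_types, lifting))
  define F1 where "F1 r = (g r)\<^sup>2 * r" for r
  define F2 where "F2 r = 4 * (s r)\<^sup>2 / r\<^sup>2 * r" for r
  define F3 where "F3 r = (2 * (s r)\<^sup>2 - 1)\<^sup>2 * r" for r
  have F1i: "F1 integrable_on {b..1}"
  proof -
    have "(\<lambda>r. r * (g r)\<^sup>2) absolutely_integrable_on {b..1}"
      apply (rule absolutely_integrable_bounded_measurable_product_real)
      apply (rule continuous_imp_measurable_on_sets_lebesgue)
      apply (auto intro!: continuous_intros nonnegative_absolutely_integrable_1 H(2))
      done
    then show ?thesis unfolding F1_def using abs_int_imp_int by (simp add: mult.commute)
  qed
  have "continuous_on {b..1} F2" unfolding F2_def using b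
    by (auto intro!: continuous_intros sc)
  then have F2i: "F2 integrable_on {b..1}" by (rule integrable_continuous_interval)
  have "continuous_on {b..1} F3" unfolding F3_def using b
    by (auto intro!: continuous_intros sc)
  then have F3i: "F3 integrable_on {b..1}" by (rule integrable_continuous_interval)
  have "J_energy b lam s g = 2 * pi * integral {b..1} (\<lambda>r. F1 r + F2 r + (lam/4) * F3 r)"
    unfolding J_energy_def F1_def F2_def F3_def by (simp add: algebra_simps)
  also have "\<dots> = 2 * pi * (integral {b..1} F1 + integral {b..1} F2 + (lam/4) * integral {b..1} F3)"
    using F1i F2i F3i
    by (intro arg_cong[where f="\<lambda>x. 2 * pi * x"] integral_unique has_integral_add
          has_integral_mult_right integrable_integral)
  finally have JE: "J_energy b lam s g = 2 * pi * (integral {b..1} F1 + integral {b..1} F2 + (lam/4) * integral {b..1} F3)" .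
  have "J_energy b lam s g \<le> 2 * pi * M0"
    using mn[OF const_admissible] const_energy[OF b(1)] unfolding M0_def by simp
  with JE have sumle: "integral {b..1} F1 + integral {b..1} F2 + (lam/4) * integral {b..1} F3 \<le> M0"
    by (smt (verit, best) mult_le_cancel_left_pos pi_gt_zero)
  have p1: "integral {b..1} F1 \<ge> 0" using b by (intro integral_nonneg F1i) (auto simp: F1_def)
  have p2: "integral {b..1} F2 \<ge> 0" using b by (intro integral_nonneg F2i) (auto simp: F2_def)
  have p3: "integral {b..1} F3 \<ge> 0" using b by (intro integral_nonneg F3i) (auto simp: F3_def)
  have "b * integral {b..1} (\<lambda>r. (g r)\<^sup>2) = integral {b..1} (\<lambda>r. b * (g r)\<^sup>2)"
    by (simp add: integral_mult_right)
  also have "\<dots> \<le> integral {b..1} F1"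
    using integrable_cmul[OF H(2), of b] F1i by (intro integral_le) (auto simp: F1_def mult_right_mono mult.commute intro: integrable_cmul[where c=b, simplified])
  finally have "b * integral {b..1} (\<lambda>r. (g r)\<^sup>2) \<le> integral {b..1} F1" .
  moreover have q3: "lam/4 * integral {b..1} F3 \<ge> 0" using lam p3 by simp
  ultimately have "b * integral {b..1} (\<lambda>r. (g r)\<^sup>2) \<le> M0" using sumle p2 by linarith
  then show "integral {b..1} (\<lambda>r. (g r)\<^sup>2) \<le> M0 / b" using b by (simp add: field_simps)
  have F3'i: "(\<lambda>r. (2 * (s r)\<^sup>2 - 1)\<^sup>2) integrable_on {b..1}"
    by (intro integrable_continuous_interval continuous_intros sc)
  have "b * integral {b..1} (\<lambda>r. (2 * (s r)\<^sup>2 - 1)\<^sup>2) = integral {b..1} (\<lambda>r. b * (2 * (s r)\<^sup>2 - 1)\<^sup>2)"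
    by (simp add: integral_mult_right)
  also have "\<dots> \<le> integral {b..1} F3"
    using integrable_cmul[OF F3'i, of b] F3i by (intro integral_le) (auto simp: F3_def mult_right_mono mult.commute intro: integrable_cmul[where c=b, simplified])
  finally have "lam / 4 * (b * integral {b..1} (\<lambda>r. (2 * (s r)\<^sup>2 - 1)\<^sup>2)) \<le> lam/4 * integral {b..1} F3"
    using lam by (intro mult_left_mono) auto
  then have "lam / 4 * (b * integral {b..1} (\<lambda>r. (2 * (s r)\<^sup>2 - 1)\<^sup>2)) \<le> M0"
    using sumle p1 p2 by linarith
  then show "integral {b..1} (\<lambda>r. (2 * (s r)\<^sup>2 - 1)\<^sup>2) \<le> 4 * M0 / (lam * b)"
    using b lam by (simp add: field_simps)
qed

lemma modulus:
  fixes s g :: "real \<Rightarrow> real"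
  assumes gi: "g integrable_on {b..1}" and g2i: "(\<lambda>r. (g r)\<^sup>2) integrable_on {b..1}"
    and sx: "\<And>x. x \<in> {b..1} \<Longrightarrow> s x = s b + integral {b..x} g"
    and xy: "b \<le> x" "x \<le> y" "y \<le> 1" and d: "d > 0"
  shows "\<bar>s y - s x\<bar> \<le> integral {b..1} (\<lambda>r. (g r)\<^sup>2) / (2 * d) + d * (y - x) / 2"
proof -
  have giy: "g integrable_on {b..y}" using integrable_subinterval_real[OF gi] xy by auto
  have "integral {b..x} g + integral {x..y} g = integral {b..y} g"
    using Henstock_Kurzweil_Integration.integral_combine[OF xy(1) xy(2) giy] .
  moreover have "s y = s b + integral {b..y} g" by (rule sx) (use xy in auto)
  moreover have "s x = s b + integral {b..x} g" by (rule sx) (use xy in auto)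
  ultimately have "s y - s x = integral {x..y} g" by linarith
  also have "\<bar>\<dots>\<bar> \<le> integral {x..y} (\<lambda>r. (g r)\<^sup>2 / (2 * d) + d / 2)"
  proof -
    have gxy: "g integrable_on {x..y}" using integrable_subinterval_real[OF gi] xy by auto
    have g2xy: "(\<lambda>r. (g r)\<^sup>2) integrable_on {x..y}" using integrable_subinterval_real[OF g2i] xy by auto
    have bi: "(\<lambda>r. (g r)\<^sup>2 / (2 * d) + d / 2) integrable_on {x..y}"
      using g2xy by (intro integrable_add integrable_on_const integrable_on_divide) auto
    have pw: "norm (g r) \<le> (g r)\<^sup>2 / (2 * d) + d / 2" for r
    proof -
      have "0 \<le> (\<bar>g r\<bar> - d)\<^sup>2" by simp
      then have "2 * d * \<bar>g r\<bar> \<le> (g r)\<^sup>2 + d\<^sup>2" by (simp add: power2_eq_square algebra_simps abs_mult_self_eq)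
      then show ?thesis using d by (simp add: field_simps power2_eq_square)
    qed
    show ?thesis using integral_norm_bound_integral[OF gxy bi pw] by simp
  qed
  also have "\<dots> = integral {x..y} (\<lambda>r. (g r)\<^sup>2) / (2 * d) + d * (y - x) / 2"
  proof -
    have g2xy: "(\<lambda>r. (g r)\<^sup>2) integrable_on {x..y}" using integrable_subinterval_real[OF g2i] xy by auto
    have "((\<lambda>r. (g r)\<^sup>2 / (2 * d) + d / 2) has_integral (integral {x..y} (\<lambda>r. (g r)\<^sup>2) / (2 * d) + (y - x) * (d / 2))) {x..y}"
    proof -
      have h2: "((\<lambda>r. d/2) has_integral (y-x)*(d/2)) {x..y}" using has_integral_const_real[of "d/2" x y] xy by simp
      show ?thesis by (intro has_integral_add has_integral_divide integrable_integral g2xy h2)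
    qed
    then show ?thesis by (simp add: integral_unique algebra_simps)
  qed
  also have "\<dots> \<le> integral {b..1} (\<lambda>r. (g r)\<^sup>2) / (2 * d) + d * (y - x) / 2"
  proof -
    have g2xy: "(\<lambda>r. (g r)\<^sup>2) integrable_on {x..y}" using integrable_subinterval_real[OF g2i] xy by auto
    have "integral {x..y} (\<lambda>r. (g r)\<^sup>2) \<le> integral {b..1} (\<lambda>r. (g r)\<^sup>2)"
      using xy g2xy g2i by (intro integral_subset_le) auto
    then show ?thesis using d by (simp add: divide_right_mono)
  qed
  finally show ?thesis .
qed

lemma sq_bound:
  fixes x e :: real
  assumes "e \<le> 1/2" "e > 0" "e/4 \<le> \<bar>x - 1/sqrt 2\<bar>" "\<bar>x - 1/sqrt 2\<bar> \<le> 3*e/4"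
  shows "e\<^sup>2/4 \<le> (2*x\<^sup>2-1)\<^sup>2"
proof -
  define c where "c = 1 / sqrt (2::real)"
  have c2: "2 * c\<^sup>2 = 1" unfolding c_def by (simp add: power_divide)
  have "(11/8::real) < sqrt 2" by (rule real_less_rsqrt) (simp add: power2_eq_square)
  moreover have "2 * c = sqrt 2" unfolding c_def by (simp add: divide_simps)
  ultimately have "2 * c > 11/8" by simp
  then have xc: "x + c \<ge> 1" using assms unfolding c_def[symmetric] by arith
  have "2*x\<^sup>2-1 = 2 * (x - c) * (x + c)" using c2 by (simp add: algebra_simps power2_eq_square)
  then have "\<bar>2*x\<^sup>2-1\<bar> = \<bar>2 * (x - c)\<bar> * \<bar>x + c\<bar>" by (simp only: abs_mult)
  also have "\<dots> = 2 * \<bar>x - c\<bar> * (x + c)"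
  proof -
    have a1: "\<bar>2*(x-c)\<bar> = 2*\<bar>x-c\<bar>" by (simp only: abs_mult abs_numeral)
    have a2: "\<bar>x+c\<bar> = x+c" using xc by simp
    show ?thesis by (simp only: a1 a2)
  qed
  also have "\<dots> \<ge> 2 * (e/4) * 1" using assms xc unfolding c_def[symmetric]
    by (intro mult_mono) auto
  finally have "e/2 \<le> \<bar>2*x\<^sup>2-1\<bar>" by simp
  then have "(e/2)\<^sup>2 \<le> \<bar>2*x\<^sup>2-1\<bar>\<^sup>2" using assms by (intro power_mono) auto
  then show ?thesis by (simp add: power_divide)
qed

theorem proposition4:
  fixes b :: real and s :: "real \<Rightarrow> real \<Rightarrow> real"
  assumes "0 < b" and "b < 1"
    and "\<forall>lam>0. is_minimizer b lam (s lam)"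
  shows "uniform_limit {b..1} s (\<lambda>_. 1 / sqrt 2) at_top"
proof -
  define c where "c = 1 / sqrt (2::real)"
  define M0 where "M0 = integral {b..1} (\<lambda>r. 2 / r)"
  have M0: "M0 \<ge> 0" unfolding M0_def using assms(1)
    by (intro integral_nonneg integrable_continuous_interval) (auto intro!: continuous_intros)
  define K where "K = M0 / b"
  have K: "K \<ge> 0" unfolding K_def using M0 assms(1) by simp
  have key: "\<forall>\<^sub>F lam in at_top. \<forall>x\<in>{b..1}. dist (s lam x) (1 / sqrt 2) < e" if e: "e > 0" for e
  proof -
    define \<epsilon> where "\<epsilon> = min e (1/2)"
    have \<epsilon>: "0 < \<epsilon>" "\<epsilon> \<le> 1/2" "\<epsilon> \<le> e" using e unfolding \<epsilon>_def by auto
    define d where "d = 4 * K / \<epsilon> + 1"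
    have d0: "d > 0" unfolding d_def using K \<epsilon> by (simp add: add_nonneg_pos)
    have dK: "K / (2 * d) \<le> \<epsilon> / 8"
    proof -
      have "4 * K \<le> d * \<epsilon>" unfolding d_def using \<epsilon> by (simp add: field_simps)
      then show ?thesis using d0 \<epsilon> by (simp add: field_simps)
    qed
    define l where "l = min ((1 - b) / 2) (\<epsilon> / (4 * d))"
    have l: "l > 0" "l \<le> (1 - b) / 2" "d * l / 2 \<le> \<epsilon> / 8"
    proof -
      show "l > 0" unfolding l_def using assms(2) \<epsilon> d0 by simp
      show "l \<le> (1 - b) / 2" unfolding l_def by (rule min.cobounded1)
      have "l \<le> \<epsilon> / (4 * d)" unfolding l_def by (rule min.cobounded2)
      then have "d * l \<le> d * (\<epsilon> / (4 * d))" using d0 by (intro mult_left_mono) auto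
      also have "\<dots> = \<epsilon> / 4" using d0 by simp
      finally show "d * l / 2 \<le> \<epsilon> / 8" by simp
    qed
    define P where "P = b * \<epsilon>\<^sup>2 * l"
    have P: "P > 0" unfolding P_def using assms(1) \<epsilon> l by simp
    define L where "L = 16 * M0 / P + 1"
    have L1: "L \<ge> 1" unfolding L_def using M0 P by simp
    have LP: "L * P = 16 * M0 + P" unfolding L_def using P by (simp add: field_simps)
    show ?thesis unfolding eventually_at_top_linorder
    proof (intro exI[of _ L] allI impI)
      fix lam assume lamL: "L \<le> lam"
      have lam0: "lam > 0" using lamL L1 by simp
      obtain g where adm: "admissible b (s lam) g"
        and mn: "\<And>t h. admissible b t h \<Longrightarrow> J_energy b lam (s lam) g \<le> J_energy b lam t h"
        using assms(3) lam0 unfolding is_minimizer_def by blast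
      note E = energy_bounds[OF assms(1,2) lam0 adm mn, folded M0_def]
      have modl: "\<bar>s lam y - s lam x\<bar> \<le> \<epsilon> / 4"
        if xy: "b \<le> x" "x \<le> y" "y \<le> 1" "y - x \<le> l" for x y
      proof -
        have "\<bar>s lam y - s lam x\<bar> \<le> integral {b..1} (\<lambda>r. (g r)\<^sup>2) / (2 * d) + d * (y - x) / 2"
          by (rule modulus[OF E(6) E(3) E(7) xy(1-3) d0])
        also have "integral {b..1} (\<lambda>r. (g r)\<^sup>2) / (2 * d) \<le> K / (2 * d)"
        proof -
          have "integral {b..1} (\<lambda>r. (g r)\<^sup>2) \<le> K" using E(4) unfolding K_def .
          then show ?thesis using d0 by (intro divide_right_mono) auto
        qed
        also have "d * (y - x) / 2 \<le> d * l / 2" using d0 xy by simp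
        finally show ?thesis using dK l(3) by linarith
      qed
      show "\<forall>x\<in>{b..1}. dist (s lam x) (1 / sqrt 2) < e"
      proof (rule ballI, rule ccontr)
        fix x0 assume x0: "x0 \<in> {b..1}" and nl: "\<not> dist (s lam x0) (1 / sqrt 2) < e"
        have far: "\<epsilon> \<le> \<bar>s lam x0 - c\<bar>" using nl \<epsilon> unfolding c_def dist_real_def by simp
        have cont: "continuous_on {b..x0} (\<lambda>x. \<bar>s lam x - c\<bar>)"
          using x0 by (intro continuous_intros continuous_on_subset[OF E(1)]) auto
        have sb: "\<bar>s lam b - c\<bar> = 0" using E(2) unfolding c_def by simp
        obtain x1 where x1: "b \<le> x1" "x1 \<le> x0" "\<bar>s lam x1 - c\<bar> = \<epsilon> / 2"
          using IVT'[of "\<lambda>x. \<bar>s lam x - c\<bar>" b "\<epsilon> / 2" x0, OF _ _ _ cont] sb far \<epsilon> x0 by auto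
        define u where "u = (if x1 + l \<le> 1 then x1 else x1 - l)"
        have u: "b \<le> u" "u + l \<le> 1" "u \<le> x1" "x1 \<le> u + l"
          using x1 x0 l unfolding u_def by auto
        have band: "\<epsilon> / 4 \<le> \<bar>s lam r - c\<bar> \<and> \<bar>s lam r - c\<bar> \<le> 3 * \<epsilon> / 4" if r: "r \<in> {u..u+l}" for r
        proof -
          have "\<bar>s lam r - s lam x1\<bar> \<le> \<epsilon> / 4"
          proof (cases "r \<le> x1")
            case True
            then show ?thesis using modl[of r x1] r u x1 by (auto simp: abs_minus_commute)
          next
            case False
            then show ?thesis using modl[of x1 r] r u x1 by auto
          qed
          then show ?thesis using x1(3) by arith
        qed
        have pw: "\<epsilon>\<^sup>2 / 4 \<le> (2 * (s lam r)\<^sup>2 - 1)\<^sup>2" if "r \<in> {u..u+l}" for r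
          using sq_bound[of \<epsilon> "s lam r"] band[OF that] \<epsilon> unfolding c_def by auto
        have sqi: "(\<lambda>r. (2 * (s lam r)\<^sup>2 - 1)\<^sup>2) integrable_on {b..1}"
          by (intro integrable_continuous_interval continuous_intros E(1))
        have sqi2: "(\<lambda>r. (2 * (s lam r)\<^sup>2 - 1)\<^sup>2) integrable_on {u..u+l}"
          using integrable_subinterval_real[OF sqi] u by auto
        have ci: "((\<lambda>r. \<epsilon>\<^sup>2 / 4) has_integral l * (\<epsilon>\<^sup>2 / 4)) {u..u+l}"
          using has_integral_const_real[of "\<epsilon>\<^sup>2 / 4" u "u+l"] l by simp
        have "l * (\<epsilon>\<^sup>2 / 4) \<le> integral {u..u+l} (\<lambda>r. (2 * (s lam r)\<^sup>2 - 1)\<^sup>2)"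
          using has_integral_le[OF ci integrable_integral[OF sqi2] pw] by simp
        also have "\<dots> \<le> integral {b..1} (\<lambda>r. (2 * (s lam r)\<^sup>2 - 1)\<^sup>2)"
          using u sqi2 sqi by (intro integral_subset_le) auto
        also have "\<dots> \<le> 4 * M0 / (lam * b)" by (rule E(5))
        finally have ineq: "l * (\<epsilon>\<^sup>2 / 4) \<le> 4 * M0 / (lam * b)" .
        then have "lam * P \<le> 16 * M0" unfolding P_def using lam0 assms(1) by (simp add: field_simps)
        moreover have "L * P \<le> lam * P" using lamL P by simp
        ultimately show False using LP P by linarith
      qed
    qed
  qed
  show ?thesis unfolding uniform_limit_iff using key by simp
qed

end
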